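(* Let $W\in L^2(\mathbb P;\mathcal G)$. If $W\in\overline{\mathsf L_{\mathcal G}\circ V}$, then there exists $\gamma\in\mathsf L_V(\mathcal H;\mathcal G)$ with $W=\gamma\circ V$ $\mathbb P$-a.s. If $W\in\overline{\mathsf A_{\mathcal G}\circ V}$, then there exists $\gamma\in\mathsf A_V(\mathcal H;\mathcal G)$ with $W=\gamma\circ V$ $\mathbb P$-a.s. In short, $\overline{\mathsf L_{\mathcal G}\circ V}\subseteq\mathsf L_V(\mathcal H;\mathcal G)\circ V$ and $\overline{\mathsf A_{\mathcal G}\circ V}\subseteq\mathsf A_V(\mathcal H;\mathcal G)\circ V$.
   Context: $(\Omega,\Sigma,\mathbb P)$ is a probability space, $\mathcal G,\mathcal H$ are separable real Hilbert spaces, and $L^2(\mathbb P;\mathcal G)$ denotes the Bochner space of square-integrable $\mathcal G$-valued random variables (modulo a.s. equality). Let $V\in L^2(\mathbb P;\mathcal H)$. Define: - $\mathsf L(\mathcal H;\mathcal G)$, the bounded linear operators $\mathcal H\to\mathcal G$; - $\mathsf A(\mathcal H;\mathcal G)$, the maps $h\mapsto b+Ah$ with $b\in\mathcal G$ and $A\in\mathsf L(\mathcal H;\mathcal G)$; - $\mathsf L_V(\mathcal H;\mathcal G)$, the (possibly unbounded) linear maps $\gamma:\mathcal H\to\mathcal G$ defined on all of $\mathcal H$ with $\gamma\circ V\in L^2(\mathbb P;\mathcal G)$; - $\mathsf A_V(\mathcal H;\mathcal G)$, the maps $h\mapsto b+Ah$ with $b\in\mathcal G$ and $A\in\mathsf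 L_V(\mathcal H;\mathcal G)$. $\overline{\mathsf L_{\mathcal G}\circ V}$ and $\overline{\mathsf A_{\mathcal G}\circ V}$ denote the closures in $L^2(\mathbb P;\mathcal G)$ of $\{\gamma\circ V:\gamma\in\mathsf L(\mathcal H;\mathcal G)\}$ and $\{\gamma\circ V:\gamma\in\mathsf A(\mathcal H;\mathcal G)\}$, respectively. *)

theory Defs
  imports "HOL-Probability.Probability"
begin

text \<open>Separable real Hilbert spaces are modelled by the type class
  real_inner + complete_space + second_countable_topology
  (for metric spaces, separable = second countable).\<close>

definition in_L2 :: "'s measure \<Rightarrow> ('s \<Rightarrow> 'a::{real_normed_vector, second_countable_topology}) \<Rightarrow> bool" where
  "in_L2 M f \<longleftrightarrow> (\<exists>g. g \<in> borel_measurable M \<and> integrable M (\<lambda>x. (norm (g x))\<^sup>2) \<and> (AE x in M. f x = g x))"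

definition L2_dist2 :: "'s measure \<Rightarrow> ('s \<Rightarrow> 'a::real_normed_vector) \<Rightarrow> ('s \<Rightarrow> 'a) \<Rightarrow> real" where
  "L2_dist2 M f g = (\<integral>x. (norm (f x - g x))\<^sup>2 \<partial>M)"

definition in_closure_L :: "'s measure \<Rightarrow> ('s \<Rightarrow> 'h::real_normed_vector) \<Rightarrow> ('s \<Rightarrow> 'g::real_normed_vector) \<Rightarrow> bool" where
  "in_closure_L M V W \<longleftrightarrow>
     (\<exists>A :: nat \<Rightarrow> 'h \<Rightarrow> 'g. (\<forall>n. bounded_linear (A n)) \<and>
        (\<lambda>n. L2_dist2 M (\<lambda>x. A n (V x)) W) \<longlonglongrightarrow> 0)"

definition in_closure_A :: "'s measure \<Rightarrow> ('s \<Rightarrow> 'h::real_normed_vector) \<Rightarrow> ('s \<Rightarrow> 'g::real_normed_vector) \<Rightarrow> bool" where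
  "in_closure_A M V W \<longleftrightarrow>
     (\<exists>(b :: nat \<Rightarrow> 'g) (A :: nat \<Rightarrow> 'h \<Rightarrow> 'g). (\<forall>n. bounded_linear (A n)) \<and>
        (\<lambda>n. L2_dist2 M (\<lambda>x. b n + A n (V x)) W) \<longlonglongrightarrow> 0)"

text \<open>L_V(H;G): everywhere-defined (possibly unbounded) linear maps with gamma o V in L^2.\<close>
definition L_V :: "'s measure \<Rightarrow> ('s \<Rightarrow> 'h::real_vector) \<Rightarrow> ('h \<Rightarrow> 'g::{real_normed_vector, second_countable_topology}) set" where
  "L_V M V = {\<gamma>. linear \<gamma> \<and> in_L2 M (\<lambda>x. \<gamma> (V x))}"

definition A_V :: "'s measure \<Rightarrow> ('s \<Rightarrow> 'h::real_vector) \<Rightarrow> ('h \<Rightarrow> 'g::{real_normed_vector, second_countable_topology}) set" where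
  "A_V M V = {\<gamma>. \<exists>b A. A \<in> L_V M V \<and> \<gamma> = (\<lambda>h. b + A h)}"

end

theory Submission imports Defs begin
lemma lin_limit_extend:
  fixes f :: "nat \<Rightarrow> 'a::real_vector \<Rightarrow> 'b::real_normed_vector"
  assumes lin: "\<And>n. linear (f n)"
  shows "\<exists>g. linear g \<and> (\<forall>h. convergent (\<lambda>n. f n h) \<longrightarrow> (\<lambda>n. f n h) \<longlonglongrightarrow> g h)"
proof -
  obtain B where B: "B \<subseteq> {h. convergent (\<lambda>n. f n h)}" "independent B"
    "{h. convergent (\<lambda>n. f n h)} \<subseteq> span B"
    by (rule maximal_independent_subset)
  from linear_independent_extend[OF B(2), of "\<lambda>x. lim (\<lambda>n. f n x)"]
  obtain g where g0: "linear g \<and> (\<forall>x\<in>B. g x = lim (\<lambda>n. f n x))" ..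
  have g: "linear g" "\<forall>x\<in>B. g x = lim (\<lambda>n. f n x)" using g0 by (rule conjunct1, rule conjunct2)
  have *: "(\<lambda>n. f n h) \<longlonglongrightarrow> g h" if "h \<in> span B" for h
    using that
  proof (induct rule: span_induct_alt)
    case base
    have f0: "\<And>n. f n 0 = 0" by (rule linear_0[OF lin])
    have g0: "g 0 = 0" by (rule linear_0[OF g(1)])
    show ?case unfolding f0 g0 by (rule tendsto_const)
  next
    case (step c x y)
    have cx: "convergent (\<lambda>n. f n x)" using step(1) B(1) by blast
    have gx: "g x = lim (\<lambda>n. f n x)" using g(2) step(1) by blast
    have hx: "(\<lambda>n. f n x) \<longlonglongrightarrow> g x"
      unfolding gx using cx by (rule convergent_LIMSEQ_iff[THEN iffD1])
    have "(\<lambda>n. c *\<^sub>R f n x + f n y) \<longlonglongrightarrow> c *\<^sub>R g x + g y"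
      by (rule tendsto_add[OF tendsto_scaleR[OF tendsto_const hx] step(2)])
    moreover have "\<And>n. f n (c *\<^sub>R x + y) = c *\<^sub>R f n x + f n y"
      by (simp only: linear_add[OF lin] linear_scale[OF lin])
    moreover have "g (c *\<^sub>R x + y) = c *\<^sub>R g x + g y"
      by (simp only: linear_add[OF g(1)] linear_scale[OF g(1)])
    ultimately show ?case by simp
  qed
  have "\<forall>h. convergent (\<lambda>n. f n h) \<longrightarrow> (\<lambda>n. f n h) \<longlonglongrightarrow> g h"
  proof (intro allI impI)
    fix h assume "convergent (\<lambda>n. f n h)"
    then have "h \<in> span B" using B(3) by blast
    then show "(\<lambda>n. f n h) \<longlonglongrightarrow> g h" by (rule *)
  qed
  with g(1) show ?thesis by blast
qed

lemma sq_diff_bound: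
  fixes a b :: "'a::real_normed_vector"
  shows "(norm (a - b))\<^sup>2 \<le> 2 * (norm a)\<^sup>2 + 2 * (norm b)\<^sup>2"
proof -
  have "norm (a - b) \<le> norm a + norm b" by (rule norm_triangle_ineq4)
  then have "(norm (a - b))\<^sup>2 \<le> (norm a + norm b)\<^sup>2"
    by (intro power_mono) auto
  also have "\<dots> \<le> 2 * (norm a)\<^sup>2 + 2 * (norm b)\<^sup>2"
  proof -
    have "0 \<le> (norm a - norm b)\<^sup>2" by simp
    then show ?thesis unfolding power2_sum power2_diff by linarith
  qed
  finally show ?thesis .
qed

lemma sq_int:
  fixes f g :: "'s \<Rightarrow> 'a::{real_normed_vector, second_countable_topology}"
  assumes [measurable]: "f \<in> borel_measurable M" "g \<in> borel_measurable M"
    and "integrable M (\<lambda>x. (norm (f x))\<^sup>2)" "integrable M (\<lambda>x. (norm (g x))\<^sup>2)"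
  shows "integrable M (\<lambda>x. (norm (f x - g x))\<^sup>2)"
proof -
  have i: "integrable M (\<lambda>x. 2 * (norm (f x))\<^sup>2 + 2 * (norm (g x))\<^sup>2)"
    using assms(3,4) by simp
  have m: "(\<lambda>x. (norm (f x - g x))\<^sup>2) \<in> borel_measurable M" by measurable
  have a: "AE x in M. norm ((norm (f x - g x))\<^sup>2) \<le> norm (2 * (norm (f x))\<^sup>2 + 2 * (norm (g x))\<^sup>2)"
  proof (intro AE_I2)
    fix x
    have "0 \<le> 2 * (norm (f x))\<^sup>2 + 2 * (norm (g x))\<^sup>2" by simp
    then show "norm ((norm (f x - g x))\<^sup>2) \<le> norm (2 * (norm (f x))\<^sup>2 + 2 * (norm (g x))\<^sup>2)"
      using sq_diff_bound[of "f x" "g x"] by simp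
  qed
  show ?thesis by (rule Bochner_Integration.integrable_bound[OF i m a])
qed

lemma bl_meas:
  assumes "bounded_linear A" "V \<in> borel_measurable M"
  shows "(\<lambda>x. A (V x)) \<in> borel_measurable M"
  using measurable_compose[OF assms(2) borel_measurable_continuous_onI[OF linear_continuous_on[OF assms(1)]]]
  by (simp add: o_def)

lemma bl_int:
  fixes V :: "'s \<Rightarrow> 'h::{real_normed_vector, second_countable_topology}"
    and A :: "'h \<Rightarrow> 'g::{real_normed_vector, second_countable_topology}"
  assumes "bounded_linear A" "V \<in> borel_measurable M" "integrable M (\<lambda>x. (norm (V x))\<^sup>2)"
  shows "integrable M (\<lambda>x. (norm (A (V x)))\<^sup>2)"
proof -
  obtain K where K: "K > 0" "\<And>x. norm (A x) \<le> norm x * K"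
    using bounded_linear.pos_bounded[OF assms(1)] by blast
  have [measurable]: "(\<lambda>x. A (V x)) \<in> borel_measurable M" using bl_meas assms by blast
  have i: "integrable M (\<lambda>x. K\<^sup>2 * (norm (V x))\<^sup>2)" using assms(3) by simp
  have m: "(\<lambda>x. (norm (A (V x)))\<^sup>2) \<in> borel_measurable M" by measurable
  have a: "AE x in M. norm ((norm (A (V x)))\<^sup>2) \<le> norm (K\<^sup>2 * (norm (V x))\<^sup>2)"
    proof (intro AE_I2)
      fix x
      have "(norm (A (V x)))\<^sup>2 \<le> (norm (V x) * K)\<^sup>2"
        using K(2)[of "V x"] by (intro power_mono) auto
      also have "\<dots> = K\<^sup>2 * (norm (V x))\<^sup>2" by (simp only: power_mult_distrib mult.commute)
      finally show "norm ((norm (A (V x)))\<^sup>2) \<le> norm (K\<^sup>2 * (norm (V x))\<^sup>2)"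
        by simp
    qed
  show ?thesis by (rule Bochner_Integration.integrable_bound[OF i m a])
qed

lemma sq_to_lim:
  fixes a :: "nat \<Rightarrow> 'a::real_normed_vector"
  assumes "(\<lambda>n. (norm (a n - w))\<^sup>2) \<longlonglongrightarrow> 0"
  shows "a \<longlonglongrightarrow> w"
proof -
  have "(\<lambda>n. sqrt ((norm (a n - w))\<^sup>2)) \<longlonglongrightarrow> sqrt 0"
    by (intro tendsto_real_sqrt assms)
  then have "(\<lambda>n. norm (a n - w)) \<longlonglongrightarrow> 0" by simp
  then show ?thesis
    by (rule LIM_zero_cancel[OF tendsto_norm_zero_cancel])
qed

lemma subseq_AE:
  fixes u :: "nat \<Rightarrow> 's \<Rightarrow> 'g::{real_normed_vector, second_countable_topology}"
  assumes int: "\<And>n. integrable M (\<lambda>x. (norm (u n x - W x))\<^sup>2)"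
    and lim: "(\<lambda>n. L2_dist2 M (u n) W) \<longlonglongrightarrow> 0"
  shows "\<exists>r::nat\<Rightarrow>nat. strict_mono r \<and> (AE x in M. (\<lambda>n. u (r n) x) \<longlonglongrightarrow> W x)"
proof -
  have "(\<lambda>n. (\<integral>x. norm ((norm (u n x - W x))\<^sup>2) \<partial>M)) \<longlonglongrightarrow> 0"
    using lim by (simp add: L2_dist2_def)
  from tendsto_L1_AE_subseq[OF int this] obtain r where r: "strict_mono r"
    "AE x in M. (\<lambda>n. (norm (u (r n) x - W x))\<^sup>2) \<longlonglongrightarrow> 0" by blast
  from r(2) have "AE x in M. (\<lambda>n. u (r n) x) \<longlonglongrightarrow> W x"
  proof (rule AE_mp)
    show "AE x in M. (\<lambda>n. (norm (u (r n) x - W x))\<^sup>2) \<longlonglongrightarrow> 0 \<longrightarrow> (\<lambda>n. u (r n) x) \<longlonglongrightarrow> W x"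
      by (intro AE_I2 impI) (erule sq_to_lim)
  qed
  with r(1) show ?thesis by blast
qed

theorem mainTheorem1:
  fixes M :: "'s measure"
    and V :: "'s \<Rightarrow> 'h::{real_inner, complete_space, second_countable_topology}"
    and W :: "'s \<Rightarrow> 'g::{real_inner, complete_space, second_countable_topology}"
  assumes "prob_space M"
    and "V \<in> borel_measurable M" and "integrable M (\<lambda>x. (norm (V x))\<^sup>2)"
    and "W \<in> borel_measurable M" and "integrable M (\<lambda>x. (norm (W x))\<^sup>2)"
  shows "(in_closure_L M V W \<longrightarrow> (\<exists>\<gamma>\<in>L_V M V. AE x in M. W x = \<gamma> (V x)))
       \<and> (in_closure_A M V W \<longrightarrow> (\<exists>\<gamma>\<in>A_V M V. AE x in M. W x = \<gamma> (V x)))"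
proof (intro conjI impI)
  interpret P: prob_space M by (rule assms(1))
  note [measurable] = assms(2) assms(4)
  assume "in_closure_L M V W"
  then obtain A where A: "\<And>n. bounded_linear (A n)"
    "(\<lambda>n. L2_dist2 M (\<lambda>x. A n (V x)) W) \<longlonglongrightarrow> 0"
    unfolding in_closure_L_def by blast
  have "integrable M (\<lambda>x. (norm (A n (V x) - W x))\<^sup>2)" for n
    using sq_int[OF bl_meas[OF A(1) assms(2)] assms(4) bl_int[OF A(1) assms(2,3)] assms(5)] .
  from subseq_AE[OF this A(2)] obtain r where
    r: "AE x in M. (\<lambda>n. A (r n) (V x)) \<longlonglongrightarrow> W x" by blast
  have lin: "\<And>n. linear (A (r n))" by (rule bounded_linear.linear[OF A(1)])
  obtain g where g: "linear g" "\<And>h. convergent (\<lambda>n. A (r n) h) \<Longrightarrow> (\<lambda>n. A (r n) h) \<longlonglongrightarrow> g h"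
    using lin_limit_extend[of "\<lambda>n. A (r n)", OF lin] by blast
  have ae: "AE x in M. W x = g (V x)"
    using r
  proof (rule AE_mp)
    show "AE x in M. (\<lambda>n. A (r n) (V x)) \<longlonglongrightarrow> W x \<longrightarrow> W x = g (V x)"
    proof (intro AE_I2 impI)
      fix x assume c: "(\<lambda>n. A (r n) (V x)) \<longlonglongrightarrow> W x"
      have "convergent (\<lambda>n. A (r n) (V x))" using c by (rule convergentI)
      then have "(\<lambda>n. A (r n) (V x)) \<longlonglongrightarrow> g (V x)" by (rule g(2))
      with c show "W x = g (V x)" by (rule LIMSEQ_unique)
    qed
  qed
  have ae': "AE x in M. g (V x) = W x"
    using ae by (rule AE_mp) (intro AE_I2 impI, simp)
  have "g \<in> L_V M V"
    unfolding L_V_def in_L2_def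
    by (intro CollectI conjI g(1) exI[of _ W] assms(4) assms(5) ae')
  show "\<exists>\<gamma>\<in>L_V M V. AE x in M. W x = \<gamma> (V x)"
  proof (rule bexI[OF _ \<open>g \<in> L_V M V\<close>])
    show "AE x in M. W x = g (V x)" by (fact ae)
  qed
next
  interpret P: prob_space M by (rule assms(1))
  note [measurable] = assms(2) assms(4)
  assume "in_closure_A M V W"
  then obtain b A where A: "\<And>n. bounded_linear (A n)"
    "(\<lambda>n. L2_dist2 M (\<lambda>x. b n + A n (V x)) W) \<longlonglongrightarrow> 0"
    unfolding in_closure_A_def by blast
  have "integrable M (\<lambda>x. (norm (b n + A n (V x) - W x))\<^sup>2)" for n
  proof -
    have m: "(\<lambda>x. b n + A n (V x)) \<in> borel_measurable M"
      using bl_meas[OF A(1) assms(2)] by measurable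
    have "integrable M (\<lambda>x. (norm (A n (V x) - (- b n)))\<^sup>2)"
      by (rule sq_int[OF bl_meas[OF A(1) assms(2)] _ bl_int[OF A(1) assms(2,3)]]) auto
    then have "integrable M (\<lambda>x. (norm (b n + A n (V x)))\<^sup>2)"
      by (simp add: add.commute)
    from sq_int[OF m assms(4) this assms(5)] show ?thesis .
  qed
  from subseq_AE[OF this A(2)] obtain r where
    r: "AE x in M. (\<lambda>n. b (r n) + A (r n) (V x)) \<longlonglongrightarrow> W x" by blast
  define f where "f n = (\<lambda>(h, t::real). A (r n) h + t *\<^sub>R b (r n))" for n
  have linf: "linear (f n)" for n
  proof -
    interpret L: bounded_linear "A (r n)" by (rule A(1))
    show ?thesis
    proof (rule linearI)
      fix x y :: "'h \<times> real" and c :: real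
      obtain x1 x2 y1 y2 where xy: "x = (x1, x2)" "y = (y1, y2)" by (cases x, cases y) auto
      show "f n (x + y) = f n x + f n y"
        unfolding xy f_def by (simp add: L.add scaleR_add_left)
      show "f n (c *\<^sub>R x) = c *\<^sub>R f n x"
        unfolding xy f_def by (simp add: L.scaleR scaleR_add_right)
    qed
  qed
  obtain G where G: "linear G" "\<And>h. convergent (\<lambda>n. f n h) \<Longrightarrow> (\<lambda>n. f n h) \<longlonglongrightarrow> G h"
    using lin_limit_extend[of f] linf by blast
  have ae1: "AE x in M. W x = G (V x, 1)"
    using r
  proof (rule AE_mp)
    show "AE x in M. (\<lambda>n. b (r n) + A (r n) (V x)) \<longlonglongrightarrow> W x \<longrightarrow> W x = G (V x, 1)"
    proof (intro AE_I2 impI)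
      fix x assume c: "(\<lambda>n. b (r n) + A (r n) (V x)) \<longlonglongrightarrow> W x"
      have fe: "(\<lambda>n. f n (V x, 1)) = (\<lambda>n. b (r n) + A (r n) (V x))"
        by (simp add: f_def add.commute)
      have "convergent (\<lambda>n. f n (V x, 1))"
        unfolding fe using c by (rule convergentI)
      then have "(\<lambda>n. f n (V x, 1)) \<longlonglongrightarrow> G (V x, 1)" by (rule G(2))
      then have "(\<lambda>n. b (r n) + A (r n) (V x)) \<longlonglongrightarrow> G (V x, 1)" by (simp only: fe)
      with c show "W x = G (V x, 1)" by (rule LIMSEQ_unique)
    qed
  qed
  define A' where "A' h = G (h, 0)" for h
  define b' where "b' = G (0, 1)"
  have linA': "linear A'"
  proof (rule linearI)
    fix x y :: 'h and c :: real
    show "A' (x + y) = A' x + A' y"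
      using linear_add[OF G(1), of "(x, 0)" "(y, 0)"] by (simp add: A'_def)
    show "A' (c *\<^sub>R x) = c *\<^sub>R A' x"
      using linear_scale[OF G(1), of c "(x, 0)"] by (simp add: A'_def)
  qed
  have split: "G (h, 1) = b' + A' h" for h
    using linear_add[OF G(1), of "(0, 1)" "(h, 0)"] by (simp add: A'_def b'_def)
  have ae: "AE x in M. W x = b' + A' (V x)" using ae1 by (simp add: split)
  have "A' \<in> L_V M V"
    unfolding L_V_def in_L2_def
  proof (intro CollectI conjI linA' exI[of _ "\<lambda>x. W x - b'"])
    show "(\<lambda>x. W x - b') \<in> borel_measurable M" by measurable
    show "integrable M (\<lambda>x. (norm (W x - b'))\<^sup>2)"
      by (rule sq_int[OF assms(4) _ assms(5)]) auto
    show "AE x in M. A' (V x) = W x - b'"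
      using ae by (rule AE_mp) (intro AE_I2 impI, simp)
  qed
  then have mem: "(\<lambda>h. b' + A' h) \<in> A_V M V" unfolding A_V_def by blast
  show "\<exists>\<gamma>\<in>A_V M V. AE x in M. W x = \<gamma> (V x)"
  proof (rule bexI[OF _ mem])
    show "AE x in M. W x = b' + A' (V x)" by (fact ae)
  qed
qed

end
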